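(* Let $(a_n),(b_n)$ be defined by $a_n=2a_{n-1}b_{n-1}$, $b_n=a_{n-1}^2$ for $n\ge2$, with $a_1=2$, $b_1=1$. Then this SNRE is of the dominating type.
   Context: An SNRE $\{a_n,b_n\}$ on two symbols is of the dominating type if it admits a dominate symbol, i.e. either $a_n\ge b_n$ for all $n\in\mathbb{N}$ or $b_n\ge a_n$ for all $n\in\mathbb{N}$. *)

theory Defs
  imports Main
begin

definition dominating_type :: "(nat \<Rightarrow> nat) \<Rightarrow> (nat \<Rightarrow> nat) \<Rightarrow> bool" where
  "dominating_type a b \<longleftrightarrow> (\<forall>n\<ge>1. a n \<ge> b n) \<or> (\<forall>n\<ge>1. b n \<ge> a n)"

end

theory Submission
  imports Defs
begin

theorem lemma3:
  fixes a b :: "nat \<Rightarrow> nat"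
  assumes "a 1 = 2" and "b 1 = 1"
    and "\<And>n. n \<ge> 2 \<Longrightarrow> a n = 2 * a (n - 1) * b (n - 1)"
    and "\<And>n. n \<ge> 2 \<Longrightarrow> b n = a (n - 1) ^ 2"
  shows "dominating_type a b"
proof -
  have "b n \<le> a n \<and> a n \<le> 2 * b n" if "n \<ge> 1" for n
    using that
  proof (induction n rule: dec_induct)
    case base
    then show ?case using assms by simp
  next
    case (step m)
    have A: "a (Suc m) = 2 * a m * b m" using assms(3)[of "Suc m"] step by simp
    have B: "b (Suc m) = a m * a m" using assms(4)[of "Suc m"] step by (simp add: power2_eq_square)
    have "a m * a m \<le> 2 * a m * b m"
      using step.IH mult_le_mono2[of "a m" "2 * b m" "a m"] by (simp add: ac_simps)
    moreover have "2 * a m * b m \<le> 2 * (a m * a m)"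
      using step.IH mult_le_mono2[of "b m" "a m" "a m"] by (simp add: ac_simps)
    ultimately show ?case using A B by simp
  qed
  then show ?thesis unfolding dominating_type_def by blast
qed

end
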